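(* Assume (A1)–(A3) with functions $\xi_1,\xi_2$ and let $x_0>1$ with $\Phi(x_0)<\infty$. Then the mapping $f:\Theta\times\mathbb R\to\mathbb R$, $f(\theta,x)=\mathbb E[\Phi^*(G(\theta,Z_1)+x)-x]$, is lower semicontinuous, and its set of minimizers $S(f)$ is nonempty, compact, and contained in $\Theta\times[x_l,x_u]$ with $x_l=-\Phi(0)-1-\mathbb E[\xi_2(Z_1)]$ and $x_u=\frac{\Phi(x_0)+1+x_0+\mathbb E[\xi_2(Z_1)]+x_0\mathbb E[\xi_1(Z_1)]}{x_0-1}$.
   Context: $\Theta\subseteq\mathbb R^m$ nonempty compact; $Z_1$ an $\mathbb R^d$-valued random vector with law $\mathbb P^Z$; $G:\Theta\times\mathbb R^d\to\mathbb R$; $\Phi:[0,\infty[\to[0,\infty]$ lower semicontinuous convex, $\Phi(0)<\infty$, $\Phi(x_0)<\infty$ for some $x_0>1$, $\inf\Phi=0$, $\Phi(x)/x\to\infty$; $\Phi^*(y)=\sup_{x\ge0}(xy-\Phi(x))$; $H^{\Phi^*}=\{X:\mathbb E[\Phi^*(c|X|)]<\infty\ \forall c>0\}$. (A1) $G$ is $\mathcal B(\Theta)\otimes\mathcal B(\mathbb R^d)$-measurable and $G(\cdot,z)$ lower semicontinuous. (A2) $\sup_\theta|G(\theta,z)|\le\xi_1(z)$, $\xi_1$ $\mathbb P^Z$-integrable. (A3) $G(\theta,Z_1)\in H^{\Phi^*}$ for all $\theta$, and $\sup_\theta|\Phi^*(G(\theta,z))|\le\xi_2(z)$, $\xi_2$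 $\mathbb P^Z$-integrable. *)

theory Defs
  imports "HOL-Probability.Probability"
begin

definition lsc_on :: "'a::topological_space set \<Rightarrow> ('a \<Rightarrow> 'b::linorder) \<Rightarrow> bool" where
  "lsc_on S f \<longleftrightarrow> (\<forall>x\<in>S. \<forall>a. a < f x \<longrightarrow> (\<forall>\<^sub>F y in at x within S. a < f y))"

definition convex_ext :: "(real \<Rightarrow> ereal) \<Rightarrow> bool" where
  "convex_ext \<Phi> \<longleftrightarrow> (\<forall>x\<ge>0. \<forall>y\<ge>0. \<forall>t\<in>{0..1::real}.
      \<Phi> (t * x + (1 - t) * y) \<le> ereal t * \<Phi> x + ereal (1 - t) * \<Phi> y)"

(* Standing assumptions on \<Phi> : [0,\<infinity>[ \<rightarrow> [0,\<infinity>] (only values on [0,\<infinity>[ matter) *)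
definition young_like :: "(real \<Rightarrow> ereal) \<Rightarrow> bool" where
  "young_like \<Phi> \<longleftrightarrow>
     (\<forall>x\<ge>0. \<Phi> x \<ge> 0) \<and>
     lsc_on {0..} \<Phi> \<and>
     convex_ext \<Phi> \<and>
     \<Phi> 0 < \<infinity> \<and>
     (\<exists>x0>1. \<Phi> x0 < \<infinity>) \<and>
     (INF x\<in>{0..}. \<Phi> x) = 0 \<and>
     ((\<lambda>x. \<Phi> x / ereal x) \<longlongrightarrow> \<infinity>) at_top"

(* Fenchel-Legendre conjugate \<Phi>*(y) = sup_{x\<ge>0} (x y - \<Phi>(x)); under the standing
   assumptions it is finite, so it is taken real-valued. *)
definition Phi_star :: "(real \<Rightarrow> ereal) \<Rightarrow> real \<Rightarrow> real" where
  "Phi_star \<Phi> y = real_of_ereal (SUP x\<in>{0::real..}. ereal (x * y) - \<Phi> x)"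

definition orlicz_heart :: "'w measure \<Rightarrow> (real \<Rightarrow> ereal) \<Rightarrow> ('w \<Rightarrow> real) set" where
  "orlicz_heart M \<Phi> = {X. X \<in> borel_measurable M \<and>
      (\<forall>c>0. (\<integral>\<^sup>+ \<omega>. ennreal (Phi_star \<Phi> (c * \<bar>X \<omega>\<bar>)) \<partial>M) < \<infinity>)}"

definition argmin_set :: "('a \<Rightarrow> real) \<Rightarrow> 'a set \<Rightarrow> 'a set" where
  "argmin_set f D = {p\<in>D. \<forall>q\<in>D. f p \<le> f q}"

end

theory Submission
  imports Defs
begin

lemma PS_le:
  fixes \<Phi> :: "real \<Rightarrow> ereal"
  assumes nn: "\<forall>x\<ge>0. \<Phi> x \<ge> 0"
    and H: "\<And>x. x \<ge> 0 \<Longrightarrow> \<Phi> x \<noteq> \<infinity> \<Longrightarrow> x*y - real_of_ereal (\<Phi> x) \<le> B"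
  shows "(SUP x\<in>{0::real..}. ereal (x*y) - \<Phi> x) \<le> ereal B"
proof (rule SUP_least)
  fix x :: real assume "x \<in> {0..}" hence x: "x \<ge> 0" by simp
  show "ereal (x*y) - \<Phi> x \<le> ereal B"
  proof (cases "\<Phi> x = \<infinity>")
    case True thus ?thesis by simp
  next
    case False
    with nn x obtain r where r: "\<Phi> x = ereal r" by (cases "\<Phi> x") auto
    from H[OF x False] r show ?thesis by simp
  qed
qed

lemma S_finite:
  assumes Y: "young_like \<Phi>"
  shows "\<bar>(SUP x\<in>{0::real..}. ereal (x*y) - \<Phi> x)\<bar> \<noteq> \<infinity>"
proof -
  have nn: "\<forall>x\<ge>0. \<Phi> x \<ge> 0" and f0: "\<Phi> 0 < \<infinity>"
    and lim: "((\<lambda>x. \<Phi> x / ereal x) \<longlongrightarrow> \<infinity>) at_top"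
    using Y unfolding young_like_def by auto
  have "\<forall>\<^sub>F x in at_top. ereal (\<bar>y\<bar> + 1) < \<Phi> x / ereal x"
    using order_tendstoD(1)[OF lim, of "ereal (\<bar>y\<bar> + 1)"] by simp
  then obtain N where N: "\<And>x. x \<ge> N \<Longrightarrow> ereal (\<bar>y\<bar> + 1) < \<Phi> x / ereal x"
    unfolding eventually_at_top_linorder by auto
  define N' where "N' = max N 1"
  have "(SUP x\<in>{0::real..}. ereal (x*y) - \<Phi> x) \<le> ereal (N' * \<bar>y\<bar>)"
  proof (rule PS_le[OF nn])
    fix x assume x: "x \<ge> 0" and fin: "\<Phi> x \<noteq> \<infinity>"
    with nn obtain r where r: "\<Phi> x = ereal r" and r0: "r \<ge> 0" by (cases "\<Phi> x") auto
    show "x * y - real_of_ereal (\<Phi> x) \<le> N' * \<bar>y\<bar>"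
    proof (cases "x \<ge> N'")
      case True
      hence xp: "x > 0" "x \<ge> N" unfolding N'_def by auto
      from N[OF xp(2)] r xp have "\<bar>y\<bar> + 1 < r / x" by simp
      hence "x * \<bar>y\<bar> + x < r" using xp by (simp add: field_simps)
      moreover have "x * y \<le> x * \<bar>y\<bar>" using xp by (intro mult_left_mono) auto
      moreover have "0 \<le> N' * \<bar>y\<bar>" unfolding N'_def by simp
      moreover have "x * y - real_of_ereal (\<Phi> x) = x * y - r" by (simp add: r)
      ultimately show ?thesis using xp by linarith
    next
      case False
      have "x * y \<le> x * \<bar>y\<bar>" using x by (simp add: mult_left_mono)
      also have "\<dots> \<le> N' * \<bar>y\<bar>" using False by (simp add: mult_right_mono)
      finally show ?thesis using r r0 by simp
    qed
  qed
  moreover have "ereal (0*y) - \<Phi> 0 \<le> (SUP x\<in>{0::real..}. ereal (x*y) - \<Phi> x)"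
    by (rule SUP_upper) simp
  moreover have "ereal (0*y) - \<Phi> 0 \<noteq> -\<infinity>"
  proof -
    from f0 nn obtain r where "\<Phi> 0 = ereal r" by (cases "\<Phi> 0") auto
    thus ?thesis by simp
  qed
  ultimately show ?thesis by auto
qed

lemma P_ereal:
  assumes Y: "young_like \<Phi>"
  shows "ereal (Phi_star \<Phi> y) = (SUP x\<in>{0::real..}. ereal (x*y) - \<Phi> x)"
  using S_finite[OF Y, of y] unfolding Phi_star_def by (rule ereal_real')

lemma P_ge:
  assumes Y: "young_like \<Phi>" and x: "x \<ge> 0" and fin: "\<Phi> x \<noteq> \<infinity>"
  shows "x*y - real_of_ereal (\<Phi> x) \<le> Phi_star \<Phi> y"
proof -
  have nn: "\<forall>x\<ge>0. \<Phi> x \<ge> 0" using Y unfolding young_like_def by auto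
  with x fin obtain r where r: "\<Phi> x = ereal r" by (cases "\<Phi> x") auto
  have "ereal (x*y) - \<Phi> x \<le> (SUP x\<in>{0::real..}. ereal (x*y) - \<Phi> x)"
    by (rule SUP_upper) (simp add: x)
  thus ?thesis using r P_ereal[OF Y, of y, symmetric] by simp
qed

lemma P_le:
  assumes Y: "young_like \<Phi>"
    and H: "\<And>x. x \<ge> 0 \<Longrightarrow> \<Phi> x \<noteq> \<infinity> \<Longrightarrow> x*y - real_of_ereal (\<Phi> x) \<le> B"
  shows "Phi_star \<Phi> y \<le> B"
proof -
  have nn: "\<forall>x\<ge>0. \<Phi> x \<ge> 0" using Y unfolding young_like_def by auto
  have "ereal (Phi_star \<Phi> y) \<le> ereal B"
    unfolding P_ereal[OF Y] by (rule PS_le[OF nn H])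
  thus ?thesis by simp
qed

lemma P_lower:
  assumes Y: "young_like \<Phi>"
  shows "- real_of_ereal (\<Phi> 0) \<le> Phi_star \<Phi> y"
proof -
  have "\<Phi> 0 < \<infinity>" using Y unfolding young_like_def by auto
  from P_ge[OF Y, of 0 y] this show ?thesis by simp
qed

lemma P_mono:
  assumes Y: "young_like \<Phi>" and le: "y \<le> y'"
  shows "Phi_star \<Phi> y \<le> Phi_star \<Phi> y'"
proof (rule P_le[OF Y])
  fix x assume x: "x \<ge> 0" and fin: "\<Phi> x \<noteq> \<infinity>"
  have "x * y \<le> x * y'" using x le by (simp add: mult_left_mono)
  with P_ge[OF Y x fin, of y'] show "x * y - real_of_ereal (\<Phi> x) \<le> Phi_star \<Phi> y'" by simp
qed

lemma P_convex:
  assumes Y: "young_like \<Phi>"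
  shows "convex_on UNIV (Phi_star \<Phi>)"
proof (rule convex_onI)
  fix t a b :: real assume t: "0 < t" "t < 1"
  show "Phi_star \<Phi> ((1 - t) *\<^sub>R a + t *\<^sub>R b) \<le> (1 - t) * Phi_star \<Phi> a + t * Phi_star \<Phi> b"
  proof (rule P_le[OF Y])
    fix x assume x: "x \<ge> 0" and fin: "\<Phi> x \<noteq> \<infinity>"
    have 1: "(1 - t) * (x * a - real_of_ereal (\<Phi> x)) \<le> (1 - t) * Phi_star \<Phi> a"
      using P_ge[OF Y x fin, of a] t by (simp add: mult_left_mono)
    have 2: "t * (x * b - real_of_ereal (\<Phi> x)) \<le> t * Phi_star \<Phi> b"
      using P_ge[OF Y x fin, of b] t by (simp add: mult_left_mono)
    have "x * ((1 - t) *\<^sub>R a + t *\<^sub>R b) - real_of_ereal (\<Phi> x)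
        = (1 - t) * (x * a - real_of_ereal (\<Phi> x)) + t * (x * b - real_of_ereal (\<Phi> x))"
      by (simp add: algebra_simps)
    with 1 2 show "x * ((1 - t) *\<^sub>R a + t *\<^sub>R b) - real_of_ereal (\<Phi> x)
        \<le> (1 - t) * Phi_star \<Phi> a + t * Phi_star \<Phi> b" by linarith
  qed
qed simp

lemma P_cont:
  assumes Y: "young_like \<Phi>"
  shows "continuous_on UNIV (Phi_star \<Phi>)"
  by (rule convex_on_continuous[OF open_UNIV P_convex[OF Y]])


lemma lsc_seq:
  fixes f :: "'a::metric_space \<Rightarrow> 'b::linorder"
  assumes "lsc_on S f" "p \<in> S" "\<And>n. s n \<in> S" "s \<longlonglongrightarrow> p" "a < f p"
  shows "eventually (\<lambda>n. a < f (s n)) sequentially"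
proof -
  from assms(1,2,5) have "eventually (\<lambda>y. a < f y) (at p within S)"
    unfolding lsc_on_def by auto
  then obtain d where d: "d > 0" "\<forall>x\<in>S. x \<noteq> p \<and> dist x p < d \<longrightarrow> a < f x"
    unfolding eventually_at by auto
  from assms(4) d(1) have "eventually (\<lambda>n. dist (s n) p < d) sequentially" by (rule tendstoD)
  then show ?thesis
    by (rule eventually_mono) (use d assms(3,5) in metis)
qed

lemma meas_enn:
  fixes h :: "'a \<Rightarrow> real"
  assumes "h \<in> borel_measurable M"
  shows "(\<lambda>w. ennreal (h w + c)) \<in> borel_measurable M"
  using assms by (intro measurable_compose[OF _ measurable_ennreal] borel_measurable_add measurable_const) simp_all

theorem lemma7p3:
  fixes M :: "'w measure"
    and Z :: "'w \<Rightarrow> real ^ 'd"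
    and \<Theta> :: "(real ^ 'm) set"
    and G :: "real ^ 'm \<Rightarrow> real ^ 'd \<Rightarrow> real"
    and \<Phi> :: "real \<Rightarrow> ereal"
    and \<xi>1 \<xi>2 :: "real ^ 'd \<Rightarrow> real"
    and x0 :: real
  assumes M: "prob_space M"
    and Z: "Z \<in> borel_measurable M"
    and \<Theta>: "\<Theta> \<noteq> {}" "compact \<Theta>"
    and \<Phi>: "young_like \<Phi>"
    and x0: "x0 > 1" "\<Phi> x0 < \<infinity>"
    and A1_meas: "(\<lambda>(\<theta>, z). G \<theta> z) \<in> borel_measurable (restrict_space borel \<Theta> \<Otimes>\<^sub>M borel)"
    and A1_lsc: "\<And>z. lsc_on \<Theta> (\<lambda>\<theta>. G \<theta> z)"
    and A2: "\<And>z \<theta>. \<theta> \<in> \<Theta> \<Longrightarrow> \<bar>G \<theta> z\<bar> \<le> \<xi>1 z"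
    and A2_int: "integrable (distr M borel Z) \<xi>1"
    and A3_heart: "\<And>\<theta>. \<theta> \<in> \<Theta> \<Longrightarrow> (\<lambda>\<omega>. G \<theta> (Z \<omega>)) \<in> orlicz_heart M \<Phi>"
    and A3: "\<And>z \<theta>. \<theta> \<in> \<Theta> \<Longrightarrow> \<bar>Phi_star \<Phi> (G \<theta> z)\<bar> \<le> \<xi>2 z"
    and A3_int: "integrable (distr M borel Z) \<xi>2"
  defines "f \<equiv> (\<lambda>(\<theta>, x). prob_space.expectation M (\<lambda>\<omega>. Phi_star \<Phi> (G \<theta> (Z \<omega>) + x) - x))"
    and "xl \<equiv> - real_of_ereal (\<Phi> 0) - 1 - prob_space.expectation M (\<lambda>\<omega>. \<xi>2 (Z \<omega>))"
    and "xu \<equiv> (real_of_ereal (\<Phi> x0) + 1 + x0 + prob_space.expectation M (\<lambda>\<omega>. \<xi>2 (Z \<omega>))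
               + x0 * prob_space.expectation M (\<lambda>\<omega>. \<xi>1 (Z \<omega>))) / (x0 - 1)"
  shows "lsc_on (\<Theta> \<times> UNIV) f
         \<and> argmin_set f (\<Theta> \<times> UNIV) \<noteq> {}
         \<and> compact (argmin_set f (\<Theta> \<times> UNIV))
         \<and> argmin_set f (\<Theta> \<times> UNIV) \<subseteq> \<Theta> \<times> {xl..xu}"
proof -
  interpret prob_space M by (rule M)
  define P where "P = Phi_star \<Phi>"
  define c where "c = real_of_ereal (\<Phi> 0)"
  define r0 where "r0 = real_of_ereal (\<Phi> x0)"
  define E1 where "E1 = (\<integral>\<omega>. \<xi>1 (Z \<omega>) \<partial>M)"
  define E2 where "E2 = (\<integral>\<omega>. \<xi>2 (Z \<omega>) \<partial>M)"
  define S where "S = \<Theta> \<times> (UNIV :: real set)"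
  have nn: "\<forall>x\<ge>0. \<Phi> x \<ge> 0" using \<Phi> unfolding young_like_def by auto
  have c0: "c \<ge> 0" unfolding c_def using nn by (cases "\<Phi> 0") auto
  have "\<Phi> x0 \<ge> 0" using nn x0(1) by auto
  hence r00: "r0 \<ge> 0" unfolding r0_def by (cases "\<Phi> x0") auto
  have Plow: "\<And>y. - c \<le> P y" unfolding P_def c_def by (rule P_lower[OF \<Phi>])
  have Px0: "\<And>y. x0 * y - r0 \<le> P y" unfolding P_def r0_def
    using P_ge[OF \<Phi>, of x0] x0 by auto
  have Pmono: "\<And>y y'. y \<le> y' \<Longrightarrow> P y \<le> P y'" unfolding P_def by (rule P_mono[OF \<Phi>])
  have Pconv: "convex_on UNIV P" unfolding P_def by (rule P_convex[OF \<Phi>])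
  have Pcont: "continuous_on UNIV P" unfolding P_def by (rule P_cont[OF \<Phi>])
  have Pm: "P \<in> borel_measurable borel" by (rule borel_measurable_continuous_onI[OF Pcont])
  obtain \<theta>0 where th0: "\<theta>0 \<in> \<Theta>" using \<Theta> by auto
  have xi1_nn: "\<And>z. \<xi>1 z \<ge> 0" using A2[OF th0] by (meson abs_ge_zero order_trans)
  have xi2_nn: "\<And>z. \<xi>2 z \<ge> 0" using A3[OF th0] by (meson abs_ge_zero order_trans)
  have xi1m: "\<xi>1 \<in> borel_measurable borel" using borel_measurable_integrable[OF A2_int] by simp
  have xi2m: "\<xi>2 \<in> borel_measurable borel" using borel_measurable_integrable[OF A3_int] by simp
  have xi1i: "integrable M (\<lambda>\<omega>. \<xi>1 (Z \<omega>))" using A2_int integrable_distr_eq[OF Z xi1m] by simp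
  have xi2i: "integrable M (\<lambda>\<omega>. \<xi>2 (Z \<omega>))" using A3_int integrable_distr_eq[OF Z xi2m] by simp
  have E1nn: "E1 \<ge> 0" unfolding E1_def by (rule integral_nonneg_AE) (simp add: xi1_nn)
  have E2nn: "E2 \<ge> 0" unfolding E2_def by (rule integral_nonneg_AE) (simp add: xi2_nn)
  have Gm: "\<And>\<theta>. \<theta> \<in> \<Theta> \<Longrightarrow> (\<lambda>\<omega>. G \<theta> (Z \<omega>)) \<in> borel_measurable M"
  proof -
    fix \<theta> assume th: "\<theta> \<in> \<Theta>"
    have "Pair \<theta> \<in> borel \<rightarrow>\<^sub>M restrict_space borel \<Theta> \<Otimes>\<^sub>M borel"
      by (rule measurable_Pair1') (simp add: th space_restrict_space)
    from measurable_comp[OF this A1_meas] have "G \<theta> \<in> borel_measurable borel"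
      by (simp add: comp_def)
    from measurable_comp[OF Z this] show "(\<lambda>\<omega>. G \<theta> (Z \<omega>)) \<in> borel_measurable M"
      by (simp add: comp_def)
  qed
  have Gi: "\<And>\<theta>. \<theta> \<in> \<Theta> \<Longrightarrow> integrable M (\<lambda>\<omega>. G \<theta> (Z \<omega>))"
  proof -
    fix \<theta> assume th: "\<theta> \<in> \<Theta>"
    show "integrable M (\<lambda>\<omega>. G \<theta> (Z \<omega>))"
      by (rule Bochner_Integration.integrable_bound[OF xi1i Gm[OF th]])
        (auto intro!: AE_I2 order_trans[OF A2[OF th]] simp: xi1_nn)
  qed
  have hm: "\<And>\<theta> x. \<theta> \<in> \<Theta> \<Longrightarrow> (\<lambda>\<omega>. P (G \<theta> (Z \<omega>) + x)) \<in> borel_measurable M"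
    using measurable_comp[OF borel_measurable_add[OF Gm measurable_const] Pm] by (simp add: comp_def)
  have hi: "\<And>\<theta> x. \<theta> \<in> \<Theta> \<Longrightarrow> integrable M (\<lambda>\<omega>. P (G \<theta> (Z \<omega>) + x))"
  proof -
    fix \<theta> x assume th: "\<theta> \<in> \<Theta>"
    define g where "g = (\<lambda>\<omega>. G \<theta> (Z \<omega>))"
    define k where "k = (\<lambda>\<omega>. P (2 * \<bar>g \<omega>\<bar>))"
    define Q where "Q = P (2 * \<bar>x\<bar>)"
    have gm: "g \<in> borel_measurable M" unfolding g_def by (rule Gm[OF th])
    have km: "k \<in> borel_measurable M" unfolding k_def
      by (rule measurable_compose[OF _ Pm]) (intro borel_measurable_times borel_measurable_abs measurable_const gm, simp)
    have "\<forall>c>0. (\<integral>\<^sup>+ \<omega>. ennreal (Phi_star \<Phi> (c * \<bar>G \<theta> (Z \<omega>)\<bar>)) \<partial>M) < \<infinity>"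
      using A3_heart[OF th] unfolding orlicz_heart_def by blast
    from this[rule_format, of 2] have heart: "(\<integral>\<^sup>+ \<omega>. ennreal (k \<omega>) \<partial>M) < \<infinity>"
      unfolding k_def g_def P_def by simp
    have kabs: "ennreal (norm (k \<omega>)) \<le> ennreal (k \<omega>) + ennreal c" for \<omega>
    proof (cases "k \<omega> \<ge> 0")
      case True thus ?thesis by simp
    next
      case False
      have "-c \<le> k \<omega>" unfolding k_def by (rule Plow)
      with False have "ennreal (norm (k \<omega>)) \<le> ennreal c" by (intro ennreal_leI) simp
      thus ?thesis using False by (simp add: ennreal_neg)
    qed
    have "(\<integral>\<^sup>+ \<omega>. ennreal (norm (k \<omega>)) \<partial>M) \<le> (\<integral>\<^sup>+ \<omega>. ennreal (k \<omega>) + ennreal c \<partial>M)"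
      by (rule nn_integral_mono) (rule kabs)
    also have "\<dots> = (\<integral>\<^sup>+ \<omega>. ennreal (k \<omega>) \<partial>M) + ennreal c"
      using km by (subst nn_integral_add) (auto simp: emeasure_space_1)
    also have "\<dots> < \<infinity>" using heart by (simp add: less_top)
    finally have ki: "integrable M k" by (intro integrableI_bounded km)
    have dom: "integrable M (\<lambda>\<omega>. \<bar>k \<omega>\<bar> + \<bar>Q\<bar> + c)"
      by (auto intro!: Bochner_Integration.integrable_add integrable_abs ki)
    have bnd: "\<bar>P (g \<omega> + x)\<bar> \<le> \<bar>k \<omega>\<bar> + \<bar>Q\<bar> + c" for \<omega>
    proof -
      have "P (g \<omega> + x) \<le> P ((1 - 1/2) *\<^sub>R (2 * \<bar>g \<omega>\<bar>) + (1/2) *\<^sub>R (2 * \<bar>x\<bar>))"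
        by (rule Pmono) simp
      also have "\<dots> \<le> (1 - 1/2) * P (2 * \<bar>g \<omega>\<bar>) + (1/2) * P (2 * \<bar>x\<bar>)"
        by (rule convex_onD[OF Pconv]) auto
      finally have "P (g \<omega> + x) \<le> k \<omega> / 2 + Q / 2" unfolding k_def Q_def by simp
      moreover have "-c \<le> P (g \<omega> + x)" by (rule Plow)
      ultimately show ?thesis using c0 by (simp add: abs_le_iff) linarith
    qed
    show "integrable M (\<lambda>\<omega>. P (G \<theta> (Z \<omega>) + x))"
      by (rule Bochner_Integration.integrable_bound[OF dom hm[OF th]])
        (auto intro!: AE_I2 order_trans[OF bnd[unfolded g_def]] simp: c0)
  qed
  define E where "E = (\<lambda>\<theta> x. \<integral>\<omega>. P (G \<theta> (Z \<omega>) + x) \<partial>M)"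
  have f_eq: "\<And>\<theta> x. \<theta> \<in> \<Theta> \<Longrightarrow> f (\<theta>, x) = E \<theta> x - x"
    unfolding f_def E_def P_def using hi unfolding P_def by (simp add: prob_space)
  have Elow: "\<And>\<theta> x. \<theta> \<in> \<Theta> \<Longrightarrow> -c \<le> E \<theta> x"
  proof -
    fix \<theta> x assume th: "\<theta> \<in> \<Theta>"
    have "(\<integral>\<omega>. -c \<partial>M) \<le> E \<theta> x" unfolding E_def
      by (rule integral_mono) (auto intro: hi[OF th] Plow)
    thus "-c \<le> E \<theta> x" by (simp add: prob_space)
  qed
  have Gl: "\<And>\<theta>. \<theta> \<in> \<Theta> \<Longrightarrow> -E1 \<le> (\<integral>\<omega>. G \<theta> (Z \<omega>) \<partial>M)"
  proof -
    fix \<theta> assume th: "\<theta> \<in> \<Theta>"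
    have "(\<integral>\<omega>. - \<xi>1 (Z \<omega>) \<partial>M) \<le> (\<integral>\<omega>. G \<theta> (Z \<omega>) \<partial>M)"
    proof (rule integral_mono)
      fix \<omega> show "- \<xi>1 (Z \<omega>) \<le> G \<theta> (Z \<omega>)" using A2[OF th, of "Z \<omega>"] by (simp add: abs_le_iff)
    qed (auto intro: Gi[OF th] xi1i)
    thus "-E1 \<le> (\<integral>\<omega>. G \<theta> (Z \<omega>) \<partial>M)" by (simp add: E1_def)
  qed
  have Eup: "\<And>\<theta> x. \<theta> \<in> \<Theta> \<Longrightarrow> x0 * (\<integral>\<omega>. G \<theta> (Z \<omega>) \<partial>M) + (x0 * x - r0) \<le> E \<theta> x"
  proof -
    fix \<theta> x assume th: "\<theta> \<in> \<Theta>"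
    have "(\<integral>\<omega>. x0 * G \<theta> (Z \<omega>) + (x0 * x - r0) \<partial>M) \<le> E \<theta> x" unfolding E_def
    proof (rule integral_mono)
      show "integrable M (\<lambda>\<omega>. x0 * G \<theta> (Z \<omega>) + (x0 * x - r0))"
        by (auto intro!: Bochner_Integration.integrable_add Gi[OF th])
      fix \<omega> show "x0 * G \<theta> (Z \<omega>) + (x0 * x - r0) \<le> P (G \<theta> (Z \<omega>) + x)"
        using Px0[of "G \<theta> (Z \<omega>) + x"] by (simp add: algebra_simps)
    qed (rule hi[OF th])
    moreover have "(\<integral>\<omega>. x0 * G \<theta> (Z \<omega>) + (x0 * x - r0) \<partial>M)
        = x0 * (\<integral>\<omega>. G \<theta> (Z \<omega>) \<partial>M) + (x0 * x - r0)"
      using Gi[OF th] by (simp add: prob_space)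
    ultimately show "x0 * (\<integral>\<omega>. G \<theta> (Z \<omega>) \<partial>M) + (x0 * x - r0) \<le> E \<theta> x" by simp
  qed
  have E0: "\<And>\<theta>. \<theta> \<in> \<Theta> \<Longrightarrow> E \<theta> 0 \<le> E2"
  proof -
    fix \<theta> assume th: "\<theta> \<in> \<Theta>"
    show "E \<theta> 0 \<le> E2" unfolding E_def E2_def
    proof (rule integral_mono)
      fix \<omega> show "P (G \<theta> (Z \<omega>) + 0) \<le> \<xi>2 (Z \<omega>)" using A3[OF th, of "Z \<omega>"] by (simp add: abs_le_iff P_def)
    qed (use hi[OF th, of 0] xi2i in auto)
  qed
  have xl_eq: "xl = -c - 1 - E2" by (simp add: xl_def c_def E2_def)
  have xu_eq: "xu = (r0 + 1 + x0 + E2 + x0 * E1) / (x0 - 1)" by (simp add: xu_def r0_def E1_def E2_def)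
  have outside: "\<And>\<theta> x. \<theta> \<in> \<Theta> \<Longrightarrow> x \<notin> {xl..xu} \<Longrightarrow> E2 < f (\<theta>, x)"
  proof -
    fix \<theta> x assume th: "\<theta> \<in> \<Theta>" and x: "x \<notin> {xl..xu}"
    show "E2 < f (\<theta>, x)"
    proof (cases "x < xl")
      case True thus ?thesis using Elow[OF th, of x] f_eq[OF th, of x] xl_eq by linarith
    next
      case False
      with x have xg: "xu < x" by auto
      have "(x0 - 1) * xu < (x0 - 1) * x" using xg x0 by (intro mult_strict_left_mono) auto
      moreover have "(x0 - 1) * xu = r0 + 1 + x0 + E2 + x0 * E1" using x0 unfolding xu_eq by simp
      moreover have "x0 * (-E1) \<le> x0 * (\<integral>\<omega>. G \<theta> (Z \<omega>) \<partial>M)"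
        using Gl[OF th] x0 by (intro mult_left_mono) auto
      moreover have "(x0 - 1) * x = x0 * x - x" by (simp add: algebra_simps)
      ultimately show ?thesis using Eup[OF th, of x] f_eq[OF th, of x] x0(1) by linarith
    qed
  qed
  have f0: "f (\<theta>0, 0) \<le> E2" using f_eq[OF th0, of 0] E0[OF th0] by simp
  have xl0: "xl \<le> 0" using c0 E2nn xl_eq by simp
  have xu0: "0 \<le> xu" unfolding xu_eq using r00 E2nn E1nn x0 by (intro divide_nonneg_pos) auto
  have nnE: "\<And>\<theta>' x'. \<theta>' \<in> \<Theta> \<Longrightarrow>
      (\<integral>\<^sup>+\<omega>. ennreal (P (G \<theta>' (Z \<omega>) + x') + c) \<partial>M) = ennreal (E \<theta>' x' + c)"
  proof -
    fix \<theta>' x' assume th: "\<theta>' \<in> \<Theta>"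
    have "integrable M (\<lambda>\<omega>. P (G \<theta>' (Z \<omega>) + x') + c)"
      using hi[OF th, of x'] by auto
    hence "(\<integral>\<^sup>+\<omega>. ennreal (P (G \<theta>' (Z \<omega>) + x') + c) \<partial>M)
        = ennreal (\<integral>\<omega>. P (G \<theta>' (Z \<omega>) + x') + c \<partial>M)"
    proof (rule nn_integral_eq_integral)
      show "AE \<omega> in M. 0 \<le> P (G \<theta>' (Z \<omega>) + x') + c"
        by (rule AE_I2) (use Plow in \<open>smt (verit)\<close>)
    qed
    also have "(\<integral>\<omega>. P (G \<theta>' (Z \<omega>) + x') + c \<partial>M) = E \<theta>' x' + c"
      unfolding E_def using hi[OF th, of x'] by (simp add: prob_space)
    finally show "(\<integral>\<^sup>+\<omega>. ennreal (P (G \<theta>' (Z \<omega>) + x') + c) \<partial>M) = ennreal (E \<theta>' x' + c)" .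
  qed
  have lsc: "lsc_on S f"
    unfolding lsc_on_def
  proof (intro ballI allI impI)
    fix p a assume pS: "p \<in> S" and ap: "a < f p"
    obtain \<theta> x where p: "p = (\<theta>, x)" by (cases p)
    have th: "\<theta> \<in> \<Theta>" using pS p S_def by auto
    show "eventually (\<lambda>q. a < f q) (at p within S)"
    proof (rule sequentially_imp_eventually_within, intro allI impI)
      fix s assume sa: "(\<forall>n. s n \<in> S \<and> s n \<noteq> p) \<and> s \<longlonglongrightarrow> p"
      define \<theta>n where "\<theta>n = (\<lambda>n. fst (s n))"
      define xn where "xn = (\<lambda>n. snd (s n))"
      have thn: "\<And>n. \<theta>n n \<in> \<Theta>" using sa unfolding \<theta>n_def S_def by (auto simp: mem_Times_iff)
      have sn: "\<And>n. s n = (\<theta>n n, xn n)" unfolding \<theta>n_def xn_def by simp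
      have lim\<theta>: "\<theta>n \<longlonglongrightarrow> \<theta>" using tendsto_fst[OF conjunct2[OF sa]] p unfolding \<theta>n_def by simp
      have limx: "xn \<longlonglongrightarrow> x" using tendsto_snd[OF conjunct2[OF sa]] p unfolding xn_def by simp
      have pw: "ennreal (P (G \<theta> (Z \<omega>) + x) + c) \<le> liminf (\<lambda>n. ennreal (P (G (\<theta>n n) (Z \<omega>) + xn n) + c))" for \<omega>
        unfolding le_Liminf_iff
      proof (intro allI impI)
        fix y assume y: "y < ennreal (P (G \<theta> (Z \<omega>) + x) + c)"
        define g where "g = G \<theta> (Z \<omega>)"
        from y have "y \<noteq> top" by auto
        then obtain s0 where s0: "0 \<le> s0" "y = ennreal s0" by (cases y rule: ennreal_cases) auto
        with y have s0l: "s0 < P (g + x) + c" unfolding g_def by (simp add: ennreal_less_iff)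
        have "isCont P (g + x)" using Pcont continuous_on_eq_continuous_at[OF open_UNIV] by auto
        then obtain d where d: "d > 0" "\<And>t. dist t (g + x) < d \<Longrightarrow> dist (P t) (P (g + x)) < P (g + x) + c - s0"
          unfolding continuous_at_eps_delta using s0l by (metis diff_gt_0_iff_gt)
        have "dist (P (g + x - d/2)) (P (g + x)) < P (g + x) + c - s0"
          using d by (intro d(2)) (simp add: dist_real_def)
        hence Pd: "s0 - c < P (g + x - d/2)" by (simp add: dist_real_def abs_less_iff)
        have ev1: "eventually (\<lambda>n. g - d/4 < G (\<theta>n n) (Z \<omega>)) sequentially"
          using lsc_seq[OF A1_lsc th thn lim\<theta>, of "g - d/4"] d unfolding g_def by simp
        have ev2: "eventually (\<lambda>n. x - d/4 < xn n) sequentially"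
          using order_tendstoD(1)[OF limx, of "x - d/4"] d by simp
        show "eventually (\<lambda>n. y < ennreal (P (G (\<theta>n n) (Z \<omega>) + xn n) + c)) sequentially"
          using ev1 ev2
        proof eventually_elim
          case (elim n)
          have "P (g + x - d/2) \<le> P (G (\<theta>n n) (Z \<omega>) + xn n)" using elim by (intro Pmono) simp
          with Pd s0 show ?case unfolding s0(2) by (intro ennreal_lessI) auto
        qed
      qed
      have meas: "\<And>n. (\<lambda>\<omega>. ennreal (P (G (\<theta>n n) (Z \<omega>) + xn n) + c)) \<in> borel_measurable M"
        by (rule meas_enn[OF hm[OF thn]])
      have "ennreal (E \<theta> x + c) = (\<integral>\<^sup>+\<omega>. ennreal (P (G \<theta> (Z \<omega>) + x) + c) \<partial>M)"
        using nnE[OF th] by simp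
      also have "\<dots> \<le> (\<integral>\<^sup>+\<omega>. liminf (\<lambda>n. ennreal (P (G (\<theta>n n) (Z \<omega>) + xn n) + c)) \<partial>M)"
        by (rule nn_integral_mono) (rule pw)
      also have "\<dots> \<le> liminf (\<lambda>n. \<integral>\<^sup>+\<omega>. ennreal (P (G (\<theta>n n) (Z \<omega>) + xn n) + c) \<partial>M)"
        by (rule nn_integral_liminf[OF meas])
      also have "\<dots> = liminf (\<lambda>n. ennreal (E (\<theta>n n) (xn n) + c))"
        using nnE[OF thn] by simp
      finally have LI: "ennreal (E \<theta> x + c) \<le> liminf (\<lambda>n. ennreal (E (\<theta>n n) (xn n) + c))" .
      define \<delta> where "\<delta> = f p - a"
      have \<delta>0: "\<delta> > 0" using ap unfolding \<delta>_def by simp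
      have fp: "f p = E \<theta> x - x" using f_eq[OF th] p by simp
      have ev1: "eventually (\<lambda>n. E \<theta> x + c - \<delta>/2 < E (\<theta>n n) (xn n) + c) sequentially"
      proof (cases "E \<theta> x + c - \<delta>/2 < 0")
        case True
        show ?thesis using Elow[OF thn] True by (intro always_eventually allI) (smt (verit))
      next
        case False
        have "ennreal (E \<theta> x + c - \<delta>/2) < ennreal (E \<theta> x + c)"
          using False \<delta>0 by (intro ennreal_lessI) auto
        with LI have "eventually (\<lambda>n. ennreal (E \<theta> x + c - \<delta>/2) < ennreal (E (\<theta>n n) (xn n) + c)) sequentially"
          unfolding le_Liminf_iff by auto
        thus ?thesis by (rule eventually_mono) (use False in \<open>simp add: ennreal_less_iff\<close>)
      qed
      have ev2: "eventually (\<lambda>n. xn n < x + \<delta>/2) sequentially"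
        using order_tendstoD(2)[OF limx, of "x + \<delta>/2"] \<delta>0 by simp
      show "eventually (\<lambda>n. a < f (s n)) sequentially"
        using ev1 ev2
      proof eventually_elim
        case (elim n)
        have "f (s n) = E (\<theta>n n) (xn n) - xn n" using sn[of n] f_eq[OF thn] by simp
        thus ?case using elim fp \<delta>_def by linarith
      qed
    qed
  qed
  define K where "K = \<Theta> \<times> {xl..xu}"
  have cK: "compact K" unfolding K_def by (intro compact_Times \<Theta>(2) compact_Icc)
  have KS: "K \<subseteq> S" unfolding K_def S_def by auto
  have K0: "(\<theta>0, 0) \<in> K" unfolding K_def using th0 xl0 xu0 by auto
  have S0: "(\<theta>0, 0) \<in> S" using K0 KS by auto
  have cS: "closed S" unfolding S_def by (intro closed_Times compact_imp_closed \<Theta>(2) closed_UNIV)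
  have fbelow: "\<And>k. k \<in> K \<Longrightarrow> -c - xu \<le> f k"
  proof -
    fix k assume k: "k \<in> K"
    then obtain \<theta> x where kk: "k = (\<theta>, x)" "\<theta> \<in> \<Theta>" "x \<le> xu" unfolding K_def by auto
    show "-c - xu \<le> f k" using kk f_eq[OF kk(2), of x] Elow[OF kk(2), of x] by simp
  qed
  have bdd: "bdd_below (f ` K)" by (rule bdd_belowI2[where m="-c - xu"]) (rule fbelow)
  define m where "m = Inf (f ` K)"
  have mle: "\<And>k. k \<in> K \<Longrightarrow> m \<le> f k" unfolding m_def by (rule cInf_lower[OF imageI bdd])
  have "\<forall>n. \<exists>k. k \<in> K \<and> f k < m + inverse (real (Suc n))"
  proof
    fix n
    have "Inf (f ` K) < m + inverse (real (Suc n))" unfolding m_def by simp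
    from cInf_lessD[OF _ this] K0 show "\<exists>k. k \<in> K \<and> f k < m + inverse (real (Suc n))" by blast
  qed
  from choice[OF this] obtain q where q: "\<And>n. q n \<in> K" "\<And>n. f (q n) < m + inverse (real (Suc n))"
    by blast
  obtain l r where l: "l \<in> K" and r: "strict_mono r" and qr: "(q \<circ> r) \<longlonglongrightarrow> l"
    using seq_compactE[OF compact_imp_seq_compact[OF cK], of q] q(1) by blast
  have "f l \<le> m"
  proof (rule ccontr)
    assume "\<not> f l \<le> m"
    hence gt: "m < f l" by simp
    define \<delta> where "\<delta> = f l - m"
    have \<delta>0: "\<delta> > 0" using gt \<delta>_def by simp
    have ev: "eventually (\<lambda>n. m + \<delta>/2 < f ((q \<circ> r) n)) sequentially"
      by (rule lsc_seq[OF lsc]) (use l KS q(1) qr \<delta>_def \<delta>0 in \<open>auto simp: comp_def field_simps\<close>)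
    obtain N where N: "inverse (real (Suc N)) < \<delta>/2" using reals_Archimedean \<delta>0 by (metis half_gt_zero)
    obtain n0 where n0: "\<And>n. n \<ge> n0 \<Longrightarrow> m + \<delta>/2 < f ((q \<circ> r) n)"
      using ev unfolding eventually_sequentially by auto
    define n where "n = max n0 N"
    have "N \<le> r n" using seq_suble[OF r, of n] unfolding n_def by simp
    hence "inverse (real (Suc (r n))) \<le> inverse (real (Suc N))"
      by (intro le_imp_inverse_le) auto
    moreover have "m + \<delta>/2 < f (q (r n))" using n0[of n] unfolding n_def by simp
    moreover note q(2)[of "r n"]
    ultimately show False using N by linarith
  qed
  hence fl: "\<And>k. k \<in> K \<Longrightarrow> f l \<le> f k" using mle by (meson order_trans)
  have lmin: "\<And>y. y \<in> S \<Longrightarrow> f l \<le> f y"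
  proof -
    fix y assume y: "y \<in> S"
    show "f l \<le> f y"
    proof (cases "y \<in> K")
      case True thus ?thesis by (rule fl)
    next
      case False
      obtain \<theta> x where yy: "y = (\<theta>, x)" by (cases y)
      with y False have "\<theta> \<in> \<Theta>" "x \<notin> {xl..xu}" unfolding S_def K_def by auto
      from outside[OF this] have "E2 < f y" using yy by simp
      thus ?thesis using f0 fl[OF K0] by simp
    qed
  qed
  have lam: "l \<in> argmin_set f S" unfolding argmin_set_def using l KS lmin by auto
  have sub: "argmin_set f S \<subseteq> K"
  proof
    fix y assume y: "y \<in> argmin_set f S"
    hence yS: "y \<in> S" and ymin: "f y \<le> f (\<theta>0, 0)" unfolding argmin_set_def using S0 by auto
    obtain \<theta> x where yy: "y = (\<theta>, x)" by (cases y)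
    show "y \<in> K"
    proof (rule ccontr)
      assume "y \<notin> K"
      with yS yy have "\<theta> \<in> \<Theta>" "x \<notin> {xl..xu}" unfolding S_def K_def by auto
      from outside[OF this] yy ymin f0 show False by simp
    qed
  qed
  define C where "C = {y \<in> S. f y \<le> f l}"
  have eqC: "argmin_set f S = K \<inter> C"
    unfolding C_def using sub lam KS unfolding argmin_set_def by auto
  have cC: "closed C"
    unfolding closed_sequential_limits
  proof (intro allI impI)
    fix y L assume yl: "(\<forall>n. y n \<in> C) \<and> y \<longlonglongrightarrow> L"
    have LS: "L \<in> S" using cS yl unfolding closed_sequential_limits C_def by blast
    have "f L \<le> f l"
    proof (rule ccontr)
      assume "\<not> f L \<le> f l"
      hence "f l < f L" by simp
      from lsc_seq[OF lsc LS _ _ this, of y] yl have "eventually (\<lambda>n. f l < f (y n)) sequentially"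
        unfolding C_def by auto
      hence "eventually (\<lambda>n. False) sequentially"
        by (rule eventually_mono) (use yl in \<open>fastforce simp: C_def not_le[symmetric]\<close>)
      thus False by simp
    qed
    thus "L \<in> C" using LS unfolding C_def by simp
  qed
  have "compact (argmin_set f S)" unfolding eqC by (rule compact_Int_closed[OF cK cC])
  thus ?thesis using lsc lam sub unfolding S_def K_def by blast
qed

end
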